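(* Let $\theta$ be a discrete valuation on Johnstone's dcpo $\mathcal J$ (with the Scott topology) with total mass $\theta(\mathcal J)=1-r$, where $r>0$. Then $\theta+r\mu$ is not a minimal valuation, where $\mu(U)=1$ for non-empty Scott-open $U$ and $\mu(\emptyset)=0$.
   Context: Johnstone's dcpo: $\mathcal J=\mathbb N\times(\mathbb N\cup\{\infty\})$ ordered by $(a,b)\le(c,d)$ iff either ($a=c$ and $b\le d$) or ($d=\infty$ and $b\le c$). A valuation on a space $X$ is a strict, monotone, modular map $\mathcal OX\to[0,\infty]$; it is continuous if it preserves directed suprema of opens. Continuous valuations are ordered pointwise, forming a dcpo $\mathcal VX$ with pointwise directed suprema. A simple valuation is a finite sum $\sum_{i=1}^n r_i\delta_{x_i}$ ($r_i\in[0,\infty)$, $\delta_x$ the Dirac valuation); a discrete valuation is a countable sum $\sum_{i=1}^\infty r_i\delta_{x_i}$ (supremum of its partial sums). The minimal valuations are the elements of the smallest subset of $\mathcal VX$ containing the simple valuations and closed under directed suprema. *)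

theory Defs
  imports "HOL-Library.Extended_Nat" "HOL-Library.Extended_Nonnegative_Real"
begin

type_synonym jpt = "nat \<times> enat"

definition jle :: "jpt \<Rightarrow> jpt \<Rightarrow> bool" where
  "jle p q \<longleftrightarrow> (fst p = fst q \<and> snd p \<le> snd q) \<or> (snd q = \<infinity> \<and> snd p \<le> enat (fst q))"

definition j_directed :: "jpt set \<Rightarrow> bool" where
  "j_directed D \<longleftrightarrow> D \<noteq> {} \<and> (\<forall>x\<in>D. \<forall>y\<in>D. \<exists>z\<in>D. jle x z \<and> jle y z)"

definition j_is_lub :: "jpt set \<Rightarrow> jpt \<Rightarrow> bool" where
  "j_is_lub D s \<longleftrightarrow> (\<forall>x\<in>D. jle x s) \<and> (\<forall>u. (\<forall>x\<in>D. jle x u) \<longrightarrow> jle s u)"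

definition scott_open :: "jpt set \<Rightarrow> bool" where
  "scott_open U \<longleftrightarrow> (\<forall>x y. x \<in> U \<longrightarrow> jle x y \<longrightarrow> y \<in> U) \<and>
     (\<forall>D s. j_directed D \<longrightarrow> j_is_lub D s \<longrightarrow> s \<in> U \<longrightarrow> D \<inter> U \<noteq> {})"

text \<open>Valuations are represented as functions on all subsets; only their values on
  Scott-open sets are meaningful.\<close>
definition dirac :: "jpt \<Rightarrow> jpt set \<Rightarrow> ennreal" where
  "dirac x U = (if x \<in> U then 1 else 0)"

definition simple_valuation :: "(jpt set \<Rightarrow> ennreal) \<Rightarrow> bool" where
  "simple_valuation \<nu> \<longleftrightarrow> (\<exists>(n::nat) (x::nat \<Rightarrow> jpt) (r::nat \<Rightarrow> real). (\<forall>i. r i \<ge> 0) \<and>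
     (\<forall>U. scott_open U \<longrightarrow> \<nu> U = (\<Sum>i<n. ennreal (r i) * dirac (x i) U)))"

definition discrete_valuation :: "(jpt set \<Rightarrow> ennreal) \<Rightarrow> bool" where
  "discrete_valuation \<nu> \<longleftrightarrow> (\<exists>(x::nat \<Rightarrow> jpt) (r::nat \<Rightarrow> real). (\<forall>i. r i \<ge> 0) \<and>
     (\<forall>U. scott_open U \<longrightarrow> \<nu> U = (\<Sum>i. ennreal (r i) * dirac (x i) U)))"

definition val_le :: "(jpt set \<Rightarrow> ennreal) \<Rightarrow> (jpt set \<Rightarrow> ennreal) \<Rightarrow> bool" where
  "val_le \<nu> \<nu>' \<longleftrightarrow> (\<forall>U. scott_open U \<longrightarrow> \<nu> U \<le> \<nu>' U)"

definition val_directed :: "(jpt set \<Rightarrow> ennreal) set \<Rightarrow> bool" where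
  "val_directed F \<longleftrightarrow> F \<noteq> {} \<and> (\<forall>a\<in>F. \<forall>b\<in>F. \<exists>c\<in>F. val_le a c \<and> val_le b c)"

inductive minimal_valuation :: "(jpt set \<Rightarrow> ennreal) \<Rightarrow> bool" where
  simple: "simple_valuation \<nu> \<Longrightarrow> minimal_valuation \<nu>"
| dsup: "val_directed F \<Longrightarrow> (\<forall>\<nu>'\<in>F. minimal_valuation \<nu>') \<Longrightarrow>
     (\<forall>U. scott_open U \<longrightarrow> \<nu> U = (SUP \<nu>'\<in>F. \<nu>' U)) \<Longrightarrow> minimal_valuation \<nu>"

definition mu :: "jpt set \<Rightarrow> ennreal" where
  "mu U = (if U = {} then 0 else 1)"

end

theory Submission
  imports Defs
begin


definition T :: "(nat \<Rightarrow> enat) \<Rightarrow> jpt set" where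
  "T f = {p. f (fst p) \<noteq> \<infinity> \<and> f (fst p) \<le> snd p}"

lemma open_T:
  assumes H: "\<And>c d c'. f c = enat d \<Longrightarrow> d \<le> c' \<Longrightarrow> f c' \<noteq> \<infinity>"
  shows "scott_open (T f)"
  unfolding scott_open_def
proof (intro conjI allI impI)
  fix x y assume x: "x \<in> T f" and le: "jle x y"
  obtain a b where xab: "x = (a,b)" by fastforce
  obtain c d where ycd: "y = (c,d)" by fastforce
  from x obtain d0 where fa: "f a = enat d0" and d0b: "enat d0 \<le> b" unfolding T_def xab by auto
  from le show "y \<in> T f" unfolding jle_def xab ycd
  proof (elim disjE conjE)
    assume "fst (a,b) = fst (c,d)" "snd (a,b) \<le> snd (c,d)"
    then show "(c,d) \<in> T f" using x xab order_trans unfolding T_def by fastforce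
  next
    assume A1: "snd (c,d) = \<infinity>" and A2: "snd (a,b) \<le> enat (fst (c,d))"
    have "b \<le> enat c" using A2 by simp
    then have "enat d0 \<le> enat c" using d0b order_trans by blast
    then have "d = \<infinity>" "d0 \<le> c" using A1 by auto
    then show "(c,d) \<in> T f" using H[OF fa] unfolding T_def by auto
  qed
next
  fix D s assume dir: "j_directed D" and lub: "j_is_lub D s" and sT: "s \<in> T f"
  show "D \<inter> T f \<noteq> {}"
  proof
    assume empty: "D \<inter> T f = {}"
    obtain c e where s: "s = (c,e)" by fastforce
    from sT obtain d0 where fc: "f c = enat d0" and d0e: "enat d0 \<le> e" unfolding T_def s by auto
    from dir obtain x0 where x0: "x0 \<in> D" unfolding j_directed_def by auto
    have below: "\<And>x. x \<in> D \<Longrightarrow> jle x s" using lub unfolding j_is_lub_def by auto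
    have notT: "\<And>x. x \<in> D \<Longrightarrow> x \<notin> T f" using empty by auto
    have least: "\<And>u. (\<forall>x\<in>D. jle x u) \<Longrightarrow> jle s u" using lub unfolding j_is_lub_def by auto
    show False
    proof (cases e)
      case (enat m)
      have col: "\<And>x. x \<in> D \<Longrightarrow> fst x = c \<and> snd x < enat d0"
      proof -
        fix x assume xD: "x \<in> D"
        have "jle x s" using below xD .
        then have "fst x = c" using enat unfolding jle_def s by auto
        moreover have "\<not> (f (fst x) \<le> snd x)" using notT[OF xD] \<open>fst x = c\<close> fc unfolding T_def by auto
        ultimately show "fst x = c \<and> snd x < enat d0" using fc by auto
      qed
      have "d0 \<ge> 1" using col[OF x0] by (cases "snd x0") (auto simp: one_enat_def)
      have "jle s (c, enat (d0 - 1))"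
      proof (rule least, rule ballI)
        fix x assume xD: "x \<in> D"
        have "snd x < enat d0" "fst x = c" using col[OF xD] by auto
        then have "snd x \<le> enat (d0 - 1)" by (cases "snd x") auto
        then show "jle x (c, enat (d0 - 1))" unfolding jle_def using \<open>fst x = c\<close> by auto
      qed
      then show False using enat d0e \<open>d0 \<ge> 1\<close> unfolding jle_def s by auto
    next
      case infinity
      have fin: "\<And>x. x \<in> D \<Longrightarrow> snd x \<le> enat (max d0 c)"
      proof -
        fix x assume xD: "x \<in> D"
        obtain a b where xab: "x = (a,b)" by fastforce
        have "jle x s" using below xD .
        then have "(a = c) \<or> b \<le> enat c" unfolding jle_def s xab by auto
        then show "snd x \<le> enat (max d0 c)"
        proof
          assume "a = c"
          then have "\<not> (enat d0 \<le> b)" using notT[OF xD] fc unfolding T_def xab by auto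
          then show ?thesis unfolding xab by (cases b) auto
        next
          assume "b \<le> enat c" then show ?thesis unfolding xab by (cases b) auto
        qed
      qed
      have samecol: "\<And>x. x \<in> D \<Longrightarrow> fst x = fst x0"
      proof -
        fix x assume xD: "x \<in> D"
        obtain z where zD: "z \<in> D" and "jle x z" "jle x0 z" using dir xD x0 unfolding j_directed_def by blast
        moreover have "snd z \<noteq> \<infinity>" using fin[OF zD] by (cases "snd z") auto
        ultimately show "fst x = fst x0" unfolding jle_def by auto
      qed
      have "jle s (fst x0, enat (max d0 c))"
        using least[of "(fst x0, enat (max d0 c))"] fin samecol unfolding jle_def by auto
      then show False unfolding jle_def s infinity by auto
    qed
  qed
qed


lemma scott_open_Un: "scott_open U \<Longrightarrow> scott_open V \<Longrightarrow> scott_open (U \<union> V)"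
  unfolding scott_open_def by blast

lemma scott_open_Int: assumes "scott_open U" "scott_open V" shows "scott_open (U \<inter> V)"
  unfolding scott_open_def
proof (intro conjI allI impI)
  fix x y assume "x \<in> U \<inter> V" "jle x y" then show "y \<in> U \<inter> V" using assms unfolding scott_open_def by blast
next
  fix D s assume dir: "j_directed D" and lub: "j_is_lub D s" and "s \<in> U \<inter> V"
  then obtain x y where "x \<in> D" "x \<in> U" "y \<in> D" "y \<in> V" using assms unfolding scott_open_def by blast
  then obtain z where "z \<in> D" "jle x z" "jle y z" using dir unfolding j_directed_def by blast
  then have "z \<in> U \<inter> V" using \<open>x \<in> U\<close> \<open>y \<in> V\<close> assms unfolding scott_open_def by blast
  then show "D \<inter> (U \<inter> V) \<noteq> {}" using \<open>z \<in> D\<close> by blast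
qed

definition W :: "nat set \<Rightarrow> nat \<Rightarrow> jpt set" where
  "W F L = {p. (fst p \<in> F \<or> L \<le> fst p) \<and> enat L \<le> snd p}"
definition Z :: "nat \<Rightarrow> nat \<Rightarrow> jpt set" where
  "Z K L = {p. K \<le> fst p \<and> enat L \<le> snd p}"
definition R :: "nat \<Rightarrow> nat \<Rightarrow> jpt set" where
  "R N L = {p. fst p < N \<or> enat L \<le> snd p}"

lemma open_W: "scott_open (W F L)"
proof -
  have "W F L = T (\<lambda>c. if c \<in> F \<or> L \<le> c then enat L else \<infinity>)"
    unfolding W_def T_def by auto
  moreover have "scott_open (T (\<lambda>c. if c \<in> F \<or> L \<le> c then enat L else \<infinity>))"
    by (rule open_T) (auto split: if_splits)
  ultimately show ?thesis by simp
qed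

lemma open_Z: "K \<le> L \<Longrightarrow> scott_open (Z K L)"
proof -
  assume KL: "K \<le> L"
  have "Z K L = T (\<lambda>c. if K \<le> c then enat L else \<infinity>)"
    unfolding Z_def T_def by auto
  moreover have "scott_open (T (\<lambda>c. if K \<le> c then enat L else \<infinity>))"
    by (rule open_T) (use KL in \<open>auto split: if_splits\<close>)
  ultimately show ?thesis by simp
qed

lemma open_R: "scott_open (R N L)"
proof -
  have "R N L = T (\<lambda>c. enat (if c < N then 0 else L))"
    unfolding R_def T_def by (auto simp: zero_enat_def[symmetric])
  moreover have "scott_open (T (\<lambda>c. enat (if c < N then 0 else L)))"
    by (rule open_T) (auto split: if_splits)
  ultimately show ?thesis by simp
qed

lemma open_UNIV: "scott_open UNIV"
  unfolding scott_open_def j_directed_def by auto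

lemma open_empty: "scott_open {}"
  unfolding scott_open_def by simp

lemma W_antimono: "L \<le> L' \<Longrightarrow> W F L' \<subseteq> W F L"
  unfolding W_def by auto (metis enat_ord_simps(1) order_trans)+

lemma W_Int: "c \<notin> F \<Longrightarrow> W {c} L \<inter> W F L = W {} L"
  unfolding W_def by auto

lemma W_Un: "W {c} L \<union> W F L = W (insert c F) L"
  unfolding W_def by auto

lemma VR_Int: "N \<le> K \<Longrightarrow> K \<le> L \<Longrightarrow> W {} K \<inter> R N L = Z K L"
  unfolding W_def R_def Z_def by auto (metis enat_ord_simps(1) order_trans)+

lemma Z_sub: "K \<le> K' \<Longrightarrow> K' \<le> L \<Longrightarrow> Z K L \<subseteq> W {K..<K'} L \<union> W {} K'"
  unfolding W_def Z_def by auto (metis enat_ord_simps(1) order_trans)+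

definition mono_v :: "(jpt set \<Rightarrow> ennreal) \<Rightarrow> bool" where
  "mono_v \<nu> \<longleftrightarrow> (\<forall>U V. scott_open U \<longrightarrow> scott_open V \<longrightarrow> U \<subseteq> V \<longrightarrow> \<nu> U \<le> \<nu> V)"
definition modular_v :: "(jpt set \<Rightarrow> ennreal) \<Rightarrow> bool" where
  "modular_v \<nu> \<longleftrightarrow> (\<forall>U V. scott_open U \<longrightarrow> scott_open V \<longrightarrow> \<nu> U + \<nu> V = \<nu> (U \<union> V) + \<nu> (U \<inter> V))"
definition propA :: "(jpt set \<Rightarrow> ennreal) \<Rightarrow> bool" where
  "propA \<nu> \<longleftrightarrow> (\<forall>e>0. \<exists>N. \<forall>L. \<nu> UNIV \<le> \<nu> (R N L) + ennreal e)"
definition propD :: "(jpt set \<Rightarrow> ennreal) \<Rightarrow> bool" where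
  "propD \<nu> \<longleftrightarrow> (\<forall>e>0. \<exists>K. \<nu> (W {} K) \<le> ennreal e)"
definition Inv :: "(jpt set \<Rightarrow> ennreal) \<Rightarrow> bool" where
  "Inv \<nu> \<longleftrightarrow> mono_v \<nu> \<and> modular_v \<nu> \<and> (\<nu> UNIV < \<infinity> \<longrightarrow> propA \<nu> \<and> propD \<nu>)"
definition pc :: "(jpt set \<Rightarrow> ennreal) \<Rightarrow> nat \<Rightarrow> ennreal" where
  "pc \<nu> c = (INF L. \<nu> (W {c} L))"

lemma simple_Inv:
  assumes "simple_valuation \<sigma>" shows "Inv \<sigma>"
proof -
  from assms[unfolded simple_valuation_def] obtain n :: nat and x r where r: "\<forall>i. r i \<ge> (0::real)"
    and sig0: "\<forall>U. scott_open U \<longrightarrow> \<sigma> U = (\<Sum>i<n. ennreal (r i) * dirac (x i) U)"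
    by blast
  have sig: "\<And>U. scott_open U \<Longrightarrow> \<sigma> U = (\<Sum>i<n. ennreal (r i) * dirac (x i) U)"
    using sig0 by blast
  define N where "N = Suc (\<Sum>i<n. fst (x i))"
  have xN: "\<And>i. i < n \<Longrightarrow> fst (x i) < N"
    unfolding N_def using member_le_sum[of _ "{..<n}" "\<lambda>i. fst (x i)"] by (simp add: le_imp_less_Suc)
  have mono: "mono_v \<sigma>" unfolding mono_v_def
  proof (intro allI impI)
    fix U V assume "scott_open U" "scott_open V" "U \<subseteq> V"
    then show "\<sigma> U \<le> \<sigma> V" unfolding sig[OF \<open>scott_open U\<close>] sig[OF \<open>scott_open V\<close>]
      by (intro sum_mono mult_left_mono) (auto simp: dirac_def)
  qed
  have modl: "modular_v \<sigma>" unfolding modular_v_def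
  proof (intro allI impI)
    fix U V assume U: "scott_open U" and V: "scott_open V"
    show "\<sigma> U + \<sigma> V = \<sigma> (U \<union> V) + \<sigma> (U \<inter> V)"
      unfolding sig[OF U] sig[OF V] sig[OF scott_open_Un[OF U V]] sig[OF scott_open_Int[OF U V]]
        sum.distrib[symmetric]
      by (intro sum.cong refl) (auto simp: dirac_def)
  qed
  have A: "propA \<sigma>" unfolding propA_def
  proof (intro allI impI exI)
    fix e :: real and L assume "e > 0"
    have "\<sigma> UNIV = \<sigma> (R N L)" unfolding sig[OF open_UNIV] sig[OF open_R]
      using xN by (intro sum.cong refl) (auto simp: dirac_def R_def)
    then show "\<sigma> UNIV \<le> \<sigma> (R N L) + ennreal e" by simp
  qed
  have D: "propD \<sigma>" unfolding propD_def
  proof (intro allI impI exI)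
    fix e :: real assume "e > 0"
    have "\<sigma> (W {} N) = 0" unfolding sig[OF open_W]
      using xN by (intro sum.neutral) (fastforce simp: dirac_def W_def not_le[symmetric])
    then show "\<sigma> (W {} N) \<le> ennreal e" by simp
  qed
  show ?thesis using mono modl A D unfolding Inv_def by blast
qed



lemma subadd:
  assumes "modular_v \<nu>" "scott_open U" "scott_open V"
  shows "\<nu> (U \<union> V) \<le> \<nu> U + \<nu> V"
proof -
  have "\<nu> U + \<nu> V = \<nu> (U \<union> V) + \<nu> (U \<inter> V)" using assms unfolding modular_v_def by blast
  then show ?thesis by (metis le_iff_add)
qed

lemma W_sum_le:
  assumes "modular_v \<nu>" "finite F"
  shows "\<nu> (W F L) \<le> (\<Sum>c\<in>F. \<nu> (W {c} L)) + \<nu> (W {} L)"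
  using assms(2)
proof (induction F rule: finite_induct)
  case empty then show ?case by simp
next
  case (insert c F)
  have "\<nu> (W (insert c F) L) \<le> \<nu> (W {c} L) + \<nu> (W F L)"
    using subadd[OF assms(1) open_W open_W] W_Un by metis
  also have "\<dots> \<le> \<nu> (W {c} L) + ((\<Sum>c\<in>F. \<nu> (W {c} L)) + \<nu> (W {} L))"
    using insert.IH by (rule add_left_mono)
  finally show ?case using insert by (simp add: add.assoc)
qed

lemma W_sum_ge:
  assumes "modular_v \<nu>"
  shows "(\<Sum>c<n. \<nu> (W {c} L)) \<le> \<nu> (W {..<n} L) + of_nat n * \<nu> (W {} L)"
proof (induction n)
  case 0 then show ?case by simp
next
  case (Suc n)
  have eq: "\<nu> (W {n} L) + \<nu> (W {..<n} L) = \<nu> (W {..<Suc n} L) + \<nu> (W {} L)"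
  proof -
    have "\<nu> (W {n} L) + \<nu> (W {..<n} L) = \<nu> (W {n} L \<union> W {..<n} L) + \<nu> (W {n} L \<inter> W {..<n} L)"
      using assms open_W unfolding modular_v_def by blast
    also have "W {n} L \<union> W {..<n} L = W {..<Suc n} L" using W_Un[where c=n and F="{..<n}" and L=L] lessThan_Suc by simp
    also have "W {n} L \<inter> W {..<n} L = W {} L" using W_Int[where c=n and F="{..<n}" and L=L] by simp
    finally show ?thesis .
  qed
  have "(\<Sum>c<Suc n. \<nu> (W {c} L)) = \<nu> (W {n} L) + (\<Sum>c<n. \<nu> (W {c} L))" by (simp add: add.commute)
  also have "\<dots> \<le> \<nu> (W {n} L) + (\<nu> (W {..<n} L) + of_nat n * \<nu> (W {} L))"
    using Suc.IH by (rule add_left_mono)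
  also have "\<dots> = \<nu> (W {..<Suc n} L) + \<nu> (W {} L) + of_nat n * \<nu> (W {} L)"
    using eq by (simp add: add.assoc[symmetric])
  also have "\<dots> = \<nu> (W {..<Suc n} L) + of_nat (Suc n) * \<nu> (W {} L)"
    by (simp add: algebra_simps)
  finally show ?case .
qed

lemma lemC:
  assumes mo: "mono_v \<nu>" and md: "modular_v \<nu>" and D: "propD \<nu>"
  shows "(\<Sum>c<n. pc \<nu> c) \<le> \<nu> UNIV"
proof (rule ennreal_le_epsilon)
  fix e :: real assume "e > 0"
  define d where "d = e / (Suc n)"
  have "d > 0" using \<open>e > 0\<close> unfolding d_def by simp
  obtain K where K: "\<nu> (W {} K) \<le> ennreal d" using D \<open>d > 0\<close> unfolding propD_def by blast
  have "(\<Sum>c<n. pc \<nu> c) \<le> (\<Sum>c<n. \<nu> (W {c} K))"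
    unfolding pc_def by (intro sum_mono INF_lower) auto
  also have "\<dots> \<le> \<nu> (W {..<n} K) + of_nat n * \<nu> (W {} K)" using W_sum_ge[OF md] .
  also have "\<dots> \<le> \<nu> UNIV + of_nat n * ennreal d"
    using mo open_W open_UNIV K unfolding mono_v_def
    by (intro add_mono mult_left_mono) auto
  also have "of_nat n * ennreal d \<le> ennreal e"
  proof -
    have "real n * d \<le> e" unfolding d_def using \<open>e > 0\<close>
      by (simp add: field_simps)
    then have "ennreal (real n) * ennreal d \<le> ennreal e"
      using \<open>d > 0\<close> by (metis ennreal_mult ennreal_leI of_nat_0_le_iff less_imp_le)
    then show ?thesis by (simp add: ennreal_of_nat_eq_real_of_nat)
  qed
  finally show "(\<Sum>c<n. pc \<nu> c) \<le> \<nu> UNIV + ennreal e" by (simp add: add_left_mono)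
qed


lemma pc_approx:
  assumes mo: "mono_v \<nu>" and fin: "\<nu> UNIV < \<infinity>" and "d > 0"
  shows "eventually (\<lambda>L. \<nu> (W {c} L) \<le> pc \<nu> c + ennreal d) sequentially"
proof -
  have "pc \<nu> c \<le> \<nu> (W {c} 0)" unfolding pc_def by (rule INF_lower) auto
  also have "\<dots> \<le> \<nu> UNIV" using mo open_W open_UNIV unfolding mono_v_def by blast
  finally have "pc \<nu> c < \<infinity>" using fin by simp
  then have "pc \<nu> c < pc \<nu> c + ennreal d" using \<open>d > 0\<close>
    by (simp add: ennreal_add_left_cancel_less)
  then obtain L0 where L0: "\<nu> (W {c} L0) < pc \<nu> c + ennreal d" unfolding pc_def
    by (auto simp: INF_less_iff)
  show ?thesis unfolding eventually_sequentially
  proof (intro exI allI impI)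
    fix L assume "L0 \<le> L"
    then have "\<nu> (W {c} L) \<le> \<nu> (W {c} L0)"
      using mo open_W W_antimono unfolding mono_v_def by blast
    then show "\<nu> (W {c} L) \<le> pc \<nu> c + ennreal d" using L0 by simp
  qed
qed

lemma lemB:
  assumes mo: "mono_v \<nu>" and md: "modular_v \<nu>" and fin: "\<nu> UNIV < \<infinity>"
    and KK: "K \<le> K'" and "dl > 0"
  shows "\<exists>L\<ge>K'. \<nu> (Z K L) \<le> (\<Sum>c\<in>{K..<K'}. pc \<nu> c) + 2 * \<nu> (W {} K') + ennreal dl"
proof -
  define n where "n = card {K..<K'}"
  define d where "d = dl / (Suc n)"
  have "d > 0" using \<open>dl > 0\<close> unfolding d_def by simp
  have "eventually (\<lambda>L. \<forall>c\<in>{K..<K'}. \<nu> (W {c} L) \<le> pc \<nu> c + ennreal d) sequentially"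
    using pc_approx[OF mo fin \<open>d > 0\<close>] by (intro eventually_ball_finite) auto
  then obtain L0 where L0: "\<And>L c. L \<ge> L0 \<Longrightarrow> c \<in> {K..<K'} \<Longrightarrow> \<nu> (W {c} L) \<le> pc \<nu> c + ennreal d"
    unfolding eventually_sequentially by blast
  define L where "L = max L0 K'"
  have "L \<ge> K'" "L \<ge> L0" "K \<le> L" using KK unfolding L_def by auto
  have s1: "\<nu> (Z K L) \<le> \<nu> (W {K..<K'} L \<union> W {} K')"
    using mo open_Z[OF \<open>K \<le> L\<close>] scott_open_Un[OF open_W open_W] Z_sub[OF KK \<open>L \<ge> K'\<close>]
    unfolding mono_v_def by blast
  have s2: "\<nu> (W {K..<K'} L \<union> W {} K') \<le> \<nu> (W {K..<K'} L) + \<nu> (W {} K')" by (rule subadd[OF md open_W open_W])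
  have s3: "\<nu> (W {K..<K'} L) \<le> (\<Sum>c\<in>{K..<K'}. \<nu> (W {c} L)) + \<nu> (W {} L)"
    by (rule W_sum_le[OF md]) simp
  have s4: "\<nu> (W {} L) \<le> \<nu> (W {} K')"
    using mo open_W W_antimono[OF \<open>L \<ge> K'\<close>] unfolding mono_v_def by blast
  have s5: "(\<Sum>c\<in>{K..<K'}. \<nu> (W {c} L)) \<le> (\<Sum>c\<in>{K..<K'}. pc \<nu> c + ennreal d)"
    using L0[OF \<open>L \<ge> L0\<close>] by (rule sum_mono)
  have s6: "(\<Sum>c\<in>{K..<K'}. pc \<nu> c + ennreal d) = (\<Sum>c\<in>{K..<K'}. pc \<nu> c) + of_nat n * ennreal d"
    unfolding sum.distrib n_def by simp
  have s7: "of_nat n * ennreal d \<le> ennreal dl"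
  proof -
    have "real n * d \<le> dl" unfolding d_def using \<open>dl > 0\<close>
      by (simp add: field_simps)
    then have "ennreal (real n) * ennreal d \<le> ennreal dl"
      using \<open>d > 0\<close> by (metis ennreal_mult ennreal_leI of_nat_0_le_iff less_imp_le)
    then show ?thesis by (simp add: ennreal_of_nat_eq_real_of_nat)
  qed
  have "\<nu> (Z K L) \<le> ((\<Sum>c\<in>{K..<K'}. pc \<nu> c) + of_nat n * ennreal d + \<nu> (W {} K')) + \<nu> (W {} K')"
  proof -
    have s5': "(\<Sum>c\<in>{K..<K'}. \<nu> (W {c} L)) \<le> (\<Sum>c\<in>{K..<K'}. pc \<nu> c) + of_nat n * ennreal d"
      using s5 unfolding s6 .
    have t: "\<nu> (W {K..<K'} L) \<le> ((\<Sum>c\<in>{K..<K'}. pc \<nu> c) + of_nat n * ennreal d) + \<nu> (W {} K')"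
      using s3 add_mono[OF s5' s4] by (rule order_trans)
    show ?thesis using order_trans[OF s1 order_trans[OF s2 add_right_mono[OF t]]] .
  qed
  also have "\<dots> \<le> ((\<Sum>c\<in>{K..<K'}. pc \<nu> c) + ennreal dl + \<nu> (W {} K')) + \<nu> (W {} K')"
    using s7 by (intro add_mono order_refl)
  also have "\<dots> = (\<Sum>c\<in>{K..<K'}. pc \<nu> c) + 2 * \<nu> (W {} K') + ennreal dl"
    by (simp add: mult_2 add_ac)
  finally have "\<nu> (Z K L) \<le> (\<Sum>c\<in>{K..<K'}. pc \<nu> c) + 2 * \<nu> (W {} K') + ennreal dl" .
  then show ?thesis using \<open>L \<ge> K'\<close> by blast
qed

lemma SUP_approx_e:
  fixes f :: "'a \<Rightarrow> ennreal"
  assumes "A \<noteq> {}" "(SUP x\<in>A. f x) < \<infinity>" "e > 0"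
  shows "\<exists>x\<in>A. (SUP x\<in>A. f x) \<le> f x + ennreal e"
proof (cases "(SUP x\<in>A. f x) = 0")
  case True then show ?thesis using assms(1) by auto
next
  case False
  then have "(SUP x\<in>A. f x) - ennreal e < (SUP x\<in>A. f x)"
    using assms by (intro ennreal_between) (auto simp: top.not_eq_extremum)
  then obtain x where "x \<in> A" "(SUP x\<in>A. f x) - ennreal e < f x"
    by (auto simp: less_SUP_iff)
  moreover have "\<And>S y. (S::ennreal) - ennreal e < y \<Longrightarrow> S \<le> y + ennreal e"
    by (metis ennreal_minus_le_iff less_imp_le add.commute)
  ultimately show ?thesis by blast
qed




lemma pc_mono: "val_le a b \<Longrightarrow> pc a c \<le> pc b c"
  unfolding pc_def val_le_def by (intro INF_mono) (use open_W in blast)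

lemma dsup_Inv:
  assumes dir: "val_directed F" and IH: "\<forall>\<nu>'\<in>F. Inv \<nu>'"
    and sup: "\<forall>U. scott_open U \<longrightarrow> \<nu> U = (SUP \<nu>'\<in>F. \<nu>' U)"
  shows "Inv \<nu>"
proof -
  have Fne: "F \<noteq> {}" using dir unfolding val_directed_def by blast
  have dirF: "\<And>a b. a \<in> F \<Longrightarrow> b \<in> F \<Longrightarrow> \<exists>c\<in>F. val_le a c \<and> val_le b c"
    using dir unfolding val_directed_def by blast
  have monoF: "\<And>a. a \<in> F \<Longrightarrow> mono_v a" and modF: "\<And>a. a \<in> F \<Longrightarrow> modular_v a"
    using IH unfolding Inv_def by auto
  have le: "\<And>a U. a \<in> F \<Longrightarrow> scott_open U \<Longrightarrow> a U \<le> \<nu> U"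
    using sup by (auto intro: SUP_upper)
  have mono: "mono_v \<nu>" unfolding mono_v_def
  proof (intro allI impI)
    fix U V assume U: "scott_open U" and V: "scott_open V" and UV: "U \<subseteq> V"
    have "(SUP \<nu>'\<in>F. \<nu>' U) \<le> (SUP \<nu>'\<in>F. \<nu>' V)"
      using monoF U V UV unfolding mono_v_def by (intro SUP_mono) blast
    then show "\<nu> U \<le> \<nu> V" using sup U V by simp
  qed
  have addsup: "\<And>U V. scott_open U \<Longrightarrow> scott_open V \<Longrightarrow>
      (SUP \<nu>'\<in>F. \<nu>' U + \<nu>' V) = (SUP \<nu>'\<in>F. \<nu>' U) + (SUP \<nu>'\<in>F. \<nu>' V)"
  proof -
    fix U V assume U: "scott_open U" and V: "scott_open V"
    show "(SUP \<nu>'\<in>F. \<nu>' U + \<nu>' V) = (SUP \<nu>'\<in>F. \<nu>' U) + (SUP \<nu>'\<in>F. \<nu>' V)"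
    proof (rule SUP_add_directed_ennreal)
      fix i j assume "i \<in> F" "j \<in> F"
      then obtain k where "k \<in> F" "val_le i k" "val_le j k" using dirF by blast
      then show "\<exists>k\<in>F. i U + j V \<le> k U + k V" using U V unfolding val_le_def by (intro bexI[of _ k] add_mono) auto
    qed
  qed
  have modl: "modular_v \<nu>" unfolding modular_v_def
  proof (intro allI impI)
    fix U V assume U: "scott_open U" and V: "scott_open V"
    have UV1: "scott_open (U \<union> V)" and UV2: "scott_open (U \<inter> V)"
      using scott_open_Un[OF U V] scott_open_Int[OF U V] .
    have "\<nu> U + \<nu> V = (SUP \<nu>'\<in>F. \<nu>' U + \<nu>' V)" using sup U V addsup[OF U V] by simp
    also have "\<dots> = (SUP \<nu>'\<in>F. \<nu>' (U \<union> V) + \<nu>' (U \<inter> V))"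
      using modF U V unfolding modular_v_def by (intro SUP_cong refl) blast
    also have "\<dots> = \<nu> (U \<union> V) + \<nu> (U \<inter> V)" using sup UV1 UV2 addsup[OF UV1 UV2] by simp
    finally show "\<nu> U + \<nu> V = \<nu> (U \<union> V) + \<nu> (U \<inter> V)" .
  qed
  have fin_part: "propA \<nu> \<and> propD \<nu>" if fin: "\<nu> UNIV < \<infinity>"
  proof -
    define C where "C = \<nu> UNIV"
    have Cfin: "C < \<infinity>" using fin unfolding C_def .
    have CSUP: "C = (SUP \<nu>'\<in>F. \<nu>' UNIV)" unfolding C_def using sup open_UNIV by simp
    have leC: "\<And>a. a \<in> F \<Longrightarrow> a UNIV \<le> C" unfolding C_def using le open_UNIV by blast
    have finF: "\<And>a. a \<in> F \<Longrightarrow> a UNIV < \<infinity>" using leC Cfin le_less_trans by blast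
    have AF: "\<And>a. a \<in> F \<Longrightarrow> propA a" and DF: "\<And>a. a \<in> F \<Longrightarrow> propD a"
      using IH finF unfolding Inv_def by auto
    have approx: "\<And>e. e > 0 \<Longrightarrow> \<exists>j0\<in>F. C \<le> j0 UNIV + ennreal e"
      using SUP_approx_e[OF Fne, of "\<lambda>a. a UNIV"] Cfin CSUP by simp
    have A: "propA \<nu>" unfolding propA_def
    proof (intro allI impI)
      fix e :: real assume "e > 0"
      then obtain j0 where j0: "j0 \<in> F" "C \<le> j0 UNIV + ennreal (e/2)" using approx[of "e/2"] by auto
      obtain N where N: "\<And>L. j0 UNIV \<le> j0 (R N L) + ennreal (e/2)"
        using AF[OF j0(1)] \<open>e > 0\<close> unfolding propA_def by (meson half_gt_zero)
      have "\<forall>L. \<nu> UNIV \<le> \<nu> (R N L) + ennreal e"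
      proof
        fix L
        have "\<nu> UNIV \<le> j0 (R N L) + ennreal (e/2) + ennreal (e/2)"
          using j0(2) N[of L] unfolding C_def by (metis add_right_mono order_trans)
        also have "\<dots> = j0 (R N L) + ennreal e"
          using \<open>e > 0\<close> by (simp add: add.assoc ennreal_plus[symmetric] del: ennreal_plus)
        also have "\<dots> \<le> \<nu> (R N L) + ennreal e" using le[OF j0(1) open_R] by (rule add_right_mono)
        finally show "\<nu> UNIV \<le> \<nu> (R N L) + ennreal e" .
      qed
      then show "\<exists>N. \<forall>L. \<nu> UNIV \<le> \<nu> (R N L) + ennreal e" by blast
    qed
    define m where "m c = (SUP a\<in>F. pc a c)" for c
    have msum: "(\<Sum>c<n. m c) = (SUP a\<in>F. \<Sum>c<n. pc a c)" for n
    proof (induction n)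
      case 0 then show ?case using Fne by simp
    next
      case (Suc n)
      have "(\<Sum>c<Suc n. m c) = (SUP a\<in>F. \<Sum>c<n. pc a c) + (SUP a\<in>F. pc a n)"
        using Suc unfolding m_def by simp
      also have "\<dots> = (SUP a\<in>F. (\<Sum>c<n. pc a c) + pc a n)"
      proof (rule SUP_add_directed_ennreal[symmetric])
        fix i j assume "i \<in> F" "j \<in> F"
        then obtain k where "k \<in> F" "val_le i k" "val_le j k" using dirF by blast
        then show "\<exists>k\<in>F. (\<Sum>c<n. pc i c) + pc j n \<le> (\<Sum>c<n. pc k c) + pc k n"
          by (intro bexI[of _ k] add_mono sum_mono pc_mono) auto
      qed
      finally show ?case by simp
    qed
    have mC: "(\<Sum>c<n. m c) \<le> C" for n
      unfolding msum
    proof (rule SUP_least)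
      fix a assume "a \<in> F"
      then have "(\<Sum>c<n. pc a c) \<le> a UNIV" using lemC monoF modF DF by blast
      then show "(\<Sum>c<n. pc a c) \<le> C" using leC[OF \<open>a \<in> F\<close>] by simp
    qed
    have tail: "\<exists>n0. \<forall>K\<ge>n0. \<forall>K'. (\<Sum>c\<in>{K..<K'}. m c) \<le> ennreal e" if "e > 0" for e :: real
    proof -
      have "(SUP n. \<Sum>c<n. m c) \<le> C" using mC by (rule SUP_least)
      then have Sfin: "(SUP n. \<Sum>c<n. m c) < \<infinity>" using Cfin by (rule le_less_trans)
      obtain n0 where n0: "(SUP n. \<Sum>c<n. m c) \<le> (\<Sum>c<n0. m c) + ennreal e"
        using SUP_approx_e[of UNIV "\<lambda>n. \<Sum>c<n. m c" e] Sfin \<open>e > 0\<close> by auto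
      have P0fin: "(\<Sum>c<n0. m c) < \<infinity>" using mC[of n0] Cfin by (rule le_less_trans)
      have "\<forall>K\<ge>n0. \<forall>K'. (\<Sum>c\<in>{K..<K'}. m c) \<le> ennreal e"
      proof (intro allI impI)
        fix K K' assume "n0 \<le> K"
        have disj: "{..<n0} \<inter> {K..<K'} = {}" using \<open>n0 \<le> K\<close> by auto
        have "(\<Sum>c<n0. m c) + (\<Sum>c\<in>{K..<K'}. m c) = (\<Sum>c\<in>{..<n0} \<union> {K..<K'}. m c)"
          using disj by (simp add: sum.union_disjoint)
        also have "\<dots> \<le> (\<Sum>c<max n0 K'. m c)" by (intro sum_mono2) auto
        also have "\<dots> \<le> (SUP n. \<Sum>c<n. m c)" by (rule SUP_upper) simp
        also have "\<dots> \<le> (\<Sum>c<n0. m c) + ennreal e" by (rule n0)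
        finally have X: "(\<Sum>c<n0. m c) + (\<Sum>c\<in>{K..<K'}. m c) \<le> (\<Sum>c<n0. m c) + ennreal e" .
        show "(\<Sum>c\<in>{K..<K'}. m c) \<le> ennreal e"
          by (metis X P0fin ennreal_add_left_cancel_le less_irrefl)
      qed
      then show ?thesis by blast
    qed
    have D: "propD \<nu>" unfolding propD_def
    proof (intro allI impI)
      fix e :: real assume "e > 0"
      define ep where "ep = e / 6"
      have "ep > 0" using \<open>e > 0\<close> unfolding ep_def by simp
      obtain j0 where j0: "j0 \<in> F" "C \<le> j0 UNIV + ennreal ep" using approx[OF \<open>ep > 0\<close>] by auto
      obtain N where N: "\<And>L. j0 UNIV \<le> j0 (R N L) + ennreal ep"
        using AF[OF j0(1)] \<open>ep > 0\<close> unfolding propA_def by meson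
      obtain n0 where n0: "\<And>K K'. K \<ge> n0 \<Longrightarrow> (\<Sum>c\<in>{K..<K'}. m c) \<le> ennreal ep"
        using tail[OF \<open>ep > 0\<close>] by blast
      define K where "K = max N n0"
      have "\<nu> (W {} K) \<le> ennreal e"
        unfolding sup[rule_format, OF open_W]
      proof (rule SUP_least)
        fix a assume "a \<in> F"
        then obtain b where b: "b \<in> F" "val_le a b" "val_le j0 b" using dirF j0(1) by blast
        have "a (W {} K) \<le> b (W {} K)" using b(2) open_W unfolding val_le_def by blast
        have mb: "mono_v b" and mdb: "modular_v b" and fb: "b UNIV < \<infinity>" and Db: "propD b"
          using monoF modF finF DF b(1) by auto
        obtain K0 where K0: "b (W {} K0) \<le> ennreal ep" using Db \<open>ep > 0\<close> unfolding propD_def by blast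
        define K' where "K' = max K K0"
        have "b (W {} K') \<le> b (W {} K0)"
          using mb open_W W_antimono[of K0 K'] unfolding mono_v_def K'_def by auto
        then have bK': "b (W {} K') \<le> ennreal ep" using K0 by simp
        obtain L where L: "L \<ge> K'" "b (Z K L) \<le> (\<Sum>c\<in>{K..<K'}. pc b c) + 2 * b (W {} K') + ennreal ep"
          using lemB[OF mb mdb fb, of K K' ep] \<open>ep > 0\<close> unfolding K'_def by auto
        have "(\<Sum>c\<in>{K..<K'}. pc b c) \<le> (\<Sum>c\<in>{K..<K'}. m c)"
          unfolding m_def using b(1) by (intro sum_mono SUP_upper)
        also have "\<dots> \<le> ennreal ep" using n0[of K K'] unfolding K_def by simp
        finally have Zb: "b (Z K L) \<le> ennreal ep + 2 * ennreal ep + ennreal ep"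
          using L(2) bK' by (meson add_mono order_trans order_refl mult_left_mono zero_le)
        have "K \<le> L" "N \<le> K" using L(1) unfolding K'_def K_def by auto
        have modeq: "b (W {} K) + b (R N L) = b (W {} K \<union> R N L) + b (Z K L)"
          using mdb open_W open_R VR_Int[OF \<open>N \<le> K\<close> \<open>K \<le> L\<close>] unfolding modular_v_def by metis
        have un: "b (W {} K \<union> R N L) \<le> C"
          using mb scott_open_Un[OF open_W open_R] open_UNIV leC[OF b(1)] unfolding mono_v_def
          by (meson order_trans subset_UNIV)
        have Rb: "C \<le> b (R N L) + 2 * ennreal ep"
        proof -
          have "C \<le> j0 (R N L) + ennreal ep + ennreal ep" using j0(2) N[of L] by (metis add_right_mono order_trans)
          also have "\<dots> \<le> b (R N L) + ennreal ep + ennreal ep"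
            using b(3) open_R unfolding val_le_def by (intro add_right_mono) blast
          finally show ?thesis by (simp add: mult_2 add.assoc)
        qed
        have "C + b (W {} K) \<le> b (W {} K) + b (R N L) + 2 * ennreal ep"
          using Rb by (metis add.commute add.left_commute add_left_mono)
        also have "\<dots> = b (W {} K \<union> R N L) + b (Z K L) + 2 * ennreal ep" using modeq by simp
        also have "\<dots> \<le> C + (ennreal ep + 2 * ennreal ep + ennreal ep) + 2 * ennreal ep"
          using un Zb by (intro add_mono order_refl)
        also have "\<dots> = C + ennreal e"
        proof -
          have "ennreal ep + 2 * ennreal ep + ennreal ep + 2 * ennreal ep = ennreal (6 * ep)"
          proof -
            have h0: "ennreal ep + 2 * ennreal ep + ennreal ep + 2 * ennreal ep = (1 + 2 + 1 + 2) * ennreal ep"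
              by (simp only: distrib_right mult_1_left)
            have "(1 + 2 + 1 + 2 :: ennreal) = 6" by simp
            then have h1: "ennreal ep + 2 * ennreal ep + ennreal ep + 2 * ennreal ep = 6 * ennreal ep"
              using h0 by simp
            have h2: "ennreal (6 * ep) = 6 * ennreal ep"
              using \<open>ep > 0\<close> by (simp add: ennreal_mult)
            show ?thesis using h1 h2 by simp
          qed
          then show ?thesis unfolding ep_def by (simp add: add.assoc)
        qed
        finally have "b (W {} K) \<le> ennreal e" using Cfin by (simp add: ennreal_add_left_cancel_le) auto
        then show "a (W {} K) \<le> ennreal e" using \<open>a (W {} K) \<le> b (W {} K)\<close> by simp
      qed
      then show "\<exists>K. \<nu> (W {} K) \<le> ennreal e" by blast
    qed
    show ?thesis using A D by blast
  qed
  show ?thesis unfolding Inv_def using mono modl fin_part by blast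
qed


lemma min_Inv: "minimal_valuation \<nu> \<Longrightarrow> Inv \<nu>"
proof (induction rule: minimal_valuation.induct)
  case (simple \<nu>)
  then show ?case by (rule simple_Inv)
next
  case (dsup F \<nu>)
  then show ?case using dsup_Inv[of F \<nu>] by blast
qed

theorem theorem3p13:
  fixes \<theta> :: "jpt set \<Rightarrow> ennreal" and r :: real
  assumes "discrete_valuation \<theta>"
    and "\<theta> UNIV + ennreal r = 1"
    and "r > 0"
  shows "\<not> minimal_valuation (\<lambda>U. \<theta> U + ennreal r * mu U)"
proof
  define \<nu> where "\<nu> = (\<lambda>U. \<theta> U + ennreal r * mu U)"
  assume "minimal_valuation (\<lambda>U. \<theta> U + ennreal r * mu U)"
  then have "Inv \<nu>" unfolding \<nu>_def by (rule min_Inv)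
  have "\<nu> UNIV = 1" unfolding \<nu>_def mu_def using assms(2) by simp
  then have "\<nu> UNIV < \<infinity>" by simp
  then have "propD \<nu>" using \<open>Inv \<nu>\<close> unfolding Inv_def by blast
  then obtain K where K: "\<nu> (W {} K) \<le> ennreal (r / 2)"
    using \<open>r > 0\<close> unfolding propD_def by (meson half_gt_zero)
  have "(K, enat K) \<in> W {} K" unfolding W_def by simp
  then have "mu (W {} K) = 1" unfolding mu_def by auto
  then have "ennreal r \<le> \<nu> (W {} K)" unfolding \<nu>_def by simp
  then have "ennreal r \<le> ennreal (r / 2)" using K by (rule order_trans)
  then have "r \<le> r / 2" using \<open>r > 0\<close> by (simp add: ennreal_le_iff)
  then show False using \<open>r > 0\<close> by simp
qed

end
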